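(* Let $d\ge1$ be an integer and $p=(d+1)(d+2)/2$. Let $f(x,y)=\sum_{a,b\ge0,\,a+b\le d} c_{a,b}\,x^{2a}y^{2b}$ (i.e. $f=c_0+c_1x^2+c_2y^2+\cdots+c_{p-1}y^{2d}$, a real linear combination of the $p$ monomials $x^{2a}y^{2b}$ with $a+b\le d$) with all coefficients satisfying $|c|\le 1$. Let $\delta>0$ and for $i=1,\dots,N$ let $S_i=\{(x,y)\mid x=x_i>0,\ 0<y_i-\delta\le y\le y_i+\delta\}$, and suppose the curve $f=0$ passes through (meets) every $S_i$. Then $$\sum_{i=1}^N f(x_i,y_i)^2\le 2(d+1)(d+2)\,\delta^2\sum_{i=1}^N h_d(x_i,y_i+\delta),\qquad h_d(x,y)=y^2\sum_{l,j\ge0,\ l+j\le d-1}(l+1)^2x^{4j}y^{4l}.$$ In particular $h_2(x,y)=y^2(1+x^4+4y^4)$, $h_3(x,y)=y^2(1+x^4+4y^4+x^8+4x^4y^4+9y^8)$, and $h_4(x,y)=y^2(1+x^4+4y^4+x^8+4x^4y^4+9y^8+x^{12}+4x^8y^4+9x^4y^8+16y^{12})$. *)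

theory Defs
  imports Complex_Main
begin

definition even_poly :: "nat \<Rightarrow> (nat \<Rightarrow> nat \<Rightarrow> real) \<Rightarrow> real \<Rightarrow> real \<Rightarrow> real" where
  "even_poly d c x y = (\<Sum>(a,b)\<in>{(a,b). a + b \<le> d}. c a b * x ^ (2*a) * y ^ (2*b))"

definition h_d :: "nat \<Rightarrow> real \<Rightarrow> real \<Rightarrow> real" where
  "h_d d x y = y^2 * (\<Sum>(l,j)\<in>{(l,j). l + j \<le> d - 1}. (real l + 1)^2 * x ^ (4*j) * y ^ (4*l))"

end

theory Submission imports Defs "HOL-Analysis.Convex" begin

lemma pow_diff_bound:
  fixes u v M :: real
  assumes "0 \<le> u" "u \<le> M" "0 \<le> v" "v \<le> M"
  shows "\<bar>u^n - v^n\<bar> \<le> real n * M^(n-1) * \<bar>u - v\<bar>"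
proof -
  have "\<bar>u^n - v^n\<bar> = \<bar>u - v\<bar> * \<bar>\<Sum>i<n. v^(n - Suc i) * u^i\<bar>"
    by (simp add: power_diff_sumr2 abs_mult)
  also have "\<bar>\<Sum>i<n. v^(n - Suc i) * u^i\<bar> \<le> (\<Sum>i<n. M^(n-1))"
  proof -
    have "\<bar>\<Sum>i<n. v^(n - Suc i) * u^i\<bar> = (\<Sum>i<n. v^(n - Suc i) * u^i)"
      using assms by (intro abs_of_nonneg sum_nonneg) auto
    also have "\<dots> \<le> (\<Sum>i<n. M^(n-1))"
    proof (rule sum_mono)
      fix i assume "i \<in> {..<n}"
      then have "v^(n - Suc i) * u^i \<le> M^(n - Suc i) * M^i"
        using assms by (intro mult_mono power_mono) auto
      also have "\<dots> = M^(n-1)" using \<open>i \<in> {..<n}\<close> by (simp flip: power_add)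
      finally show "v^(n - Suc i) * u^i \<le> M^(n-1)" .
    qed
    finally show ?thesis .
  qed
  then have "\<bar>u - v\<bar> * \<bar>\<Sum>i<n. v^(n - Suc i) * u^i\<bar> \<le> \<bar>u - v\<bar> * (real n * M^(n-1))"
    by (intro mult_left_mono) auto
  finally show ?thesis by (simp add: mult_ac)
qed

lemma card_tri: "card {(a,b). a + b \<le> (d::nat)} * 2 = (d+1)*(d+2)"
proof (induction d)
  case 0
  have "{(a,b). a + b \<le> (0::nat)} = {(0,0)}" by auto
  then show ?case by simp
next
  case (Suc d)
  have e: "{(a,b). a + b \<le> Suc d} = {(a,b). a + b \<le> d} \<union> (\<lambda>a. (a, Suc d - a)) ` {..Suc d}"
    by auto
  have f: "finite {(a,b). a + b \<le> (d::nat)}"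
    by (rule finite_subset[of _ "{..d} \<times> {..d}"]) auto
  have "card ((\<lambda>a. (a, Suc d - a)) ` {..Suc d}) = Suc (Suc d)"
    by (subst card_image) (auto simp: inj_on_def)
  moreover have "{(a,b). a + b \<le> d} \<inter> (\<lambda>a. (a, Suc d - a)) ` {..Suc d} = {}" by auto
  ultimately have "card {(a,b). a + b \<le> Suc d} = card {(a,b). a + b \<le> d} + Suc (Suc d)"
    unfolding e using f by (subst card_Un_disjoint) auto
  then show ?case using Suc by simp
qed

lemma point_bound:
  fixes d :: nat and c :: "nat \<Rightarrow> nat \<Rightarrow> real" and \<delta> x y z :: real
  assumes c: "\<And>a b. a + b \<le> d \<Longrightarrow> \<bar>c a b\<bar> \<le> 1"
    and "\<delta> > 0" "x > 0" "d \<ge> 1" "y - \<delta> > 0" "y - \<delta> \<le> z" "z \<le> y + \<delta>" "even_poly d c x z = 0"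
  shows "(even_poly d c x y)^2 \<le> 2 * (real d + 1) * (real d + 2) * \<delta>^2 * h_d d x (y + \<delta>)"
proof -
  define S where "S = {(a,b). a + b \<le> (d::nat)}"
  define Y where "Y = y + \<delta>"
  have fS: "finite S" unfolding S_def
    by (rule finite_subset[of _ "{..d} \<times> {..d}"]) auto
  define g where "g = (\<lambda>(a::nat,b::nat). 2 * real b * x^(2*a) * Y^(2*b-1))"
  have Y: "Y > 0" "y \<le> Y" "z \<le> Y" "z > 0" "y > 0" using assms by (auto simp: Y_def)
  have "even_poly d c x y = even_poly d c x y - even_poly d c x z" using assms by simp
  also have "\<dots> = (\<Sum>(a,b)\<in>S. c a b * x^(2*a) * (y^(2*b) - z^(2*b)))"
    unfolding even_poly_def S_def by (simp add: sum_subtractf[symmetric] algebra_simps split_def)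
  finally have "\<bar>even_poly d c x y\<bar> \<le> (\<Sum>(a,b)\<in>S. \<bar>c a b * x^(2*a) * (y^(2*b) - z^(2*b))\<bar>)"
    by (simp add: split_def sum_abs)
  also have "\<dots> \<le> (\<Sum>(a,b)\<in>S. \<delta> * g (a,b))"
  proof (rule sum_mono, clarify)
    fix a b assume ab: "(a,b) \<in> S"
    have "\<bar>(y^2)^b - (z^2)^b\<bar> \<le> real b * (Y^2)^(b-1) * \<bar>y^2 - z^2\<bar>"
      using Y by (intro pow_diff_bound) (auto intro: power_mono)
    also have "\<bar>y^2 - z^2\<bar> \<le> \<delta> * (2*Y)"
    proof -
      have "y^2 - z^2 = (y - z) * (y + z)" by (simp add: power2_eq_square algebra_simps)
      then have "\<bar>y^2 - z^2\<bar> = \<bar>y - z\<bar> * (y + z)" using Y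
        by (simp add: abs_mult)
      also have "\<dots> \<le> \<delta> * (2*Y)" using assms Y
        by (intro mult_mono) auto
      finally show ?thesis .
    qed
    then have "real b * (Y^2)^(b-1) * \<bar>y^2 - z^2\<bar> \<le> real b * (Y^2)^(b-1) * (\<delta> * (2*Y))"
      using Y by (intro mult_left_mono) auto
    finally have A: "\<bar>y^(2*b) - z^(2*b)\<bar> \<le> \<delta> * (2 * real b * Y^(2*b-1))"
    proof -
      assume h: "\<bar>(y^2)^b - (z^2)^b\<bar> \<le> real b * (Y^2)^(b-1) * (\<delta> * (2*Y))"
      show ?thesis
      proof (cases b)
        case 0 then show ?thesis by simp
      next
        case (Suc k)
        have e: "(Y^2)^(b-1) * Y = Y^(2*b-1)" using Suc
          by (simp add: power_mult[symmetric] power_Suc2[symmetric] del: power_Suc)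
        have "real b * (Y^2)^(b-1) * (\<delta> * (2*Y)) = \<delta> * 2 * real b * ((Y^2)^(b-1) * Y)"
          by (simp add: algebra_simps)
        also have "\<dots> = \<delta> * 2 * real b * Y^(2*b-1)" by (simp only: e)
        also have "\<dots> = \<delta> * (2 * real b * Y^(2*b-1))" by (simp only: mult.assoc)
        finally have eq: "real b * (Y^2)^(b-1) * (\<delta> * (2*Y)) = \<delta> * (2 * real b * Y^(2*b-1))" .
        have h': "\<bar>y^(2*b) - z^(2*b)\<bar> \<le> real b * (Y^2)^(b-1) * (\<delta> * (2*Y))"
          using h by (simp only: power_mult)
        show ?thesis using h' eq by linarith
      qed
    qed
    have "\<bar>c a b * x^(2*a) * (y^(2*b) - z^(2*b))\<bar> = \<bar>c a b\<bar> * x^(2*a) * \<bar>y^(2*b) - z^(2*b)\<bar>"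
      using Y \<open>x > 0\<close> by (simp add: abs_mult)
    also have "\<dots> \<le> 1 * x^(2*a) * (\<delta> * (2 * real b * Y^(2*b-1)))"
      using c[of a b] ab A \<open>x>0\<close> unfolding S_def by (intro mult_mono) auto
    finally show "\<bar>c a b * x^(2*a) * (y^(2*b) - z^(2*b))\<bar> \<le> \<delta> * g (a,b)"
      by (simp add: g_def algebra_simps)
  qed
  finally have B: "\<bar>even_poly d c x y\<bar> \<le> \<delta> * (\<Sum>p\<in>S. g p)"
    by (simp add: sum_distrib_left split_def)
  have "(even_poly d c x y)^2 \<le> (\<delta> * (\<Sum>p\<in>S. g p))^2"
    using B by (metis abs_le_square_iff abs_of_nonneg dual_order.trans abs_ge_zero power2_abs)
  also have "\<dots> = \<delta>^2 * (\<Sum>p\<in>S. g p)^2" by (simp add: power_mult_distrib)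
  also have "(\<Sum>p\<in>S. g p)^2 \<le> (\<Sum>p\<in>S. (g p)^2) * card S"
    by (rule sum_squared_le_sum_of_squares)
  finally have C: "(even_poly d c x y)^2 \<le> \<delta>^2 * ((\<Sum>p\<in>S. (g p)^2) * card S)"
    by (simp add: mult_left_mono)
  have cardS: "real (card S) = (real d + 1) * (real d + 2) / 2"
    using card_tri[of d] unfolding S_def
    by (metis (no_types, lifting) of_nat_1 of_nat_add of_nat_mult of_nat_numeral
        nonzero_mult_div_cancel_right zero_neq_numeral)
  define T where "T = {(l,j). l + j \<le> d - (1::nat)}"
  have sumg: "(\<Sum>p\<in>S. (g p)^2) = 4 * h_d d x Y"
  proof -
    have "(\<Sum>p\<in>S. (g p)^2) = (\<Sum>p\<in>S \<inter> {p. snd p \<ge> 1}. (g p)^2)"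
      using fS by (intro sum.mono_neutral_right) (auto simp: g_def)
    also have "\<dots> = (\<Sum>q\<in>T. (g (snd q, fst q + 1))^2)"
      by (rule sum.reindex_bij_witness[where i = "\<lambda>(l,j). (j, l+1)" and j = "\<lambda>(a,b). (b-1, a)"])
         (use \<open>d \<ge> 1\<close> in \<open>auto simp: S_def T_def\<close>)
    also have "\<dots> = (\<Sum>q\<in>T. 4 * (Y^2 * ((real (fst q) + 1)^2 * x^(4*snd q) * Y^(4*fst q))))"
    proof (rule sum.cong[OF refl], clarify)
      fix l j
      have "(g (j, l+1))^2 = (2 * (real l + 1) * x^(2*j) * Y^(2*l+1))^2"
        by (simp add: g_def add.commute)
      also have "\<dots> = 4 * (Y^2 * ((real l + 1)^2 * x^(4*j) * Y^(4*l)))"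
      proof -
        have e1: "(x^(2*j))^2 = x^(4*j)" by (simp flip: power_mult)
        have e2: "(Y^(2*l+1))^2 = Y^2 * Y^(4*l)"
          by (simp flip: power_mult power_add add: algebra_simps)
        have "(2 * (real l + 1) * x^(2*j) * Y^(2*l+1))^2
              = 4 * (real l + 1)^2 * (x^(2*j))^2 * (Y^(2*l+1))^2"
          by (simp only: power_mult_distrib) simp
        then show ?thesis unfolding e1 e2 by (simp add: mult_ac)
      qed
      finally show "(g (snd (l,j), fst (l,j) + 1))^2 = 4 * (Y^2 * ((real (fst (l,j)) + 1)^2 * x^(4*snd (l,j)) * Y^(4*fst (l,j))))"
        by simp
    qed
    also have "\<dots> = 4 * h_d d x Y"
      unfolding h_d_def T_def by (simp add: sum_distrib_left split_def)
    finally show ?thesis .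
  qed
  show ?thesis using C unfolding sumg cardS Y_def[symmetric]
    by (simp add: algebra_simps)
qed

theorem corollary5:
  fixes d N :: nat and c :: "nat \<Rightarrow> nat \<Rightarrow> real" and \<delta> :: real
    and xs ys :: "nat \<Rightarrow> real"
  assumes "d \<ge> 1"
    and "\<And>a b. a + b \<le> d \<Longrightarrow> \<bar>c a b\<bar> \<le> 1"
    and "\<delta> > 0"
    and "\<And>i. i \<in> {1..N} \<Longrightarrow> xs i > 0"
    and "\<And>i. i \<in> {1..N} \<Longrightarrow> ys i - \<delta> > 0"
    and "\<And>i. i \<in> {1..N} \<Longrightarrow>
           \<exists>y. ys i - \<delta> \<le> y \<and> y \<le> ys i + \<delta> \<and> even_poly d c (xs i) y = 0"
  shows "(\<Sum>i=1..N. (even_poly d c (xs i) (ys i))^2)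
           \<le> 2 * (real d + 1) * (real d + 2) * \<delta>^2 * (\<Sum>i=1..N. h_d d (xs i) (ys i + \<delta>))"
proof -
  have "\<And>i. i \<in> {1..N} \<Longrightarrow> (even_poly d c (xs i) (ys i))^2 \<le> 2 * (real d + 1) * (real d + 2) * \<delta>^2 * h_d d (xs i) (ys i + \<delta>)"
  proof -
    fix i assume i: "i \<in> {1..N}"
    obtain z where "ys i - \<delta> \<le> z" "z \<le> ys i + \<delta>" "even_poly d c (xs i) z = 0"
      using assms(6)[OF i] by blast
    then show "?thesis i" using point_bound[of d c \<delta> "xs i" "ys i" z] assms i by blast
  qed
  then have "(\<Sum>i=1..N. (even_poly d c (xs i) (ys i))^2) \<le> (\<Sum>i=1..N. 2 * (real d + 1) * (real d + 2) * \<delta>^2 * h_d d (xs i) (ys i + \<delta>))"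
    by (rule sum_mono)
  then show ?thesis by (simp add: sum_distrib_left)
qed

end
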